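(* Let $V$ be a nonzero finite-dimensional symplectic vector space over $\mathbf{C}$ and $n\ge2$. The space of polydifferential operators $\psi:\mathcal{O}(V)^{\otimes(n-1)}\to\mathcal{O}(V)$ which are symmetric (invariant under permuting the $n-1$ tensor factors) and invariant under Hamiltonian flow (i.e. $\xi_h(\psi(f_1\otimes\cdots\otimes f_{n-1}))=\sum_{j}\psi(f_1\otimes\cdots\otimes\xi_h(f_j)\otimes\cdots\otimes f_{n-1})$ for all $h,f_j\in\mathcal{O}(V)$) is one-dimensional, spanned by the multiplication map $f_1\otimes\cdots\otimes f_{n-1}\mapsto f_1\cdots f_{n-1}$. The same holds with $\mathcal{O}(V)$ replaced by its completion $\widehat{\mathcal{O}(V)}$ at the augmentation ideal.
   Context: $\xi_h=\{h,-\}$ is the Hamiltonian vector field for the Poisson bracket induced by the symplectic form. A polydifferential operator is a finite sum of maps $f_1\otimes\cdots\otimes f_{n-1}\mapsto D_1(f_1)\cdots D_{n-1}(f_{n-1})$ with $D_j$ differential operators with polynomial (resp. formal power series) coefficients. *)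

theory Defs
  imports Complex_Main "HOL-Library.Function_Algebras"
begin

text \<open>Coordinates: a basis of V indexed by the finite type 'v.  Monomials are
  exponent vectors 'v => nat; a formal power series (element of the completion of O(V))
  is an arbitrary coefficient function; a polynomial (element of O(V)) is one with
  finite support.  Addition is pointwise (Function_Algebras); the ring product is
  the Cauchy product cmul (NOT the pointwise times of Function_Algebras).\<close>

type_synonym 'v ser = "('v \<Rightarrow> nat) \<Rightarrow> complex"

definition is_poly :: "'v ser \<Rightarrow> bool" where
  "is_poly f \<longleftrightarrow> finite {\<alpha>. f \<alpha> \<noteq> 0}"

definition cmul :: "('v::finite) ser \<Rightarrow> 'v ser \<Rightarrow> 'v ser" where
  "cmul f g = (\<lambda>\<alpha>. \<Sum>\<beta>\<in>{\<beta>. \<beta> \<le> \<alpha>}. f \<beta> * g (\<lambda>v. \<alpha> v - \<beta> v))"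

definition sone :: "'v ser" where
  "sone = (\<lambda>\<alpha>. if \<alpha> = (\<lambda>_. 0) then 1 else 0)"

definition cscale :: "complex \<Rightarrow> 'v ser \<Rightarrow> 'v ser" where
  "cscale c f = (\<lambda>\<alpha>. c * f \<alpha>)"

fun mprod :: "nat \<Rightarrow> (nat \<Rightarrow> ('v::finite) ser) \<Rightarrow> 'v ser" where
  "mprod 0 F = sone"
| "mprod (Suc k) F = cmul (mprod k F) (F k)"

definition pdiff :: "'v \<Rightarrow> 'v ser \<Rightarrow> 'v ser" where
  "pdiff a f = (\<lambda>\<alpha>. of_nat (\<alpha> a + 1) * f (\<alpha>(a := \<alpha> a + 1)))"

definition pdiffs :: "('v::finite \<Rightarrow> nat) \<Rightarrow> 'v ser \<Rightarrow> 'v ser" where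
  "pdiffs \<gamma> f = (\<lambda>\<alpha>. (\<Prod>a\<in>UNIV. of_nat (fact (\<alpha> a + \<gamma> a)) / of_nat (fact (\<alpha> a)))
                      * f (\<lambda>v. \<alpha> v + \<gamma> v))"

definition diffop :: "('v::finite) ser set \<Rightarrow> ('v ser \<Rightarrow> 'v ser) \<Rightarrow> bool" where
  "diffop R D \<longleftrightarrow> (\<exists>S c. finite S \<and> (\<forall>\<gamma>\<in>S. c \<gamma> \<in> R) \<and>
       (\<forall>f. D f = (\<Sum>\<gamma>\<in>S. cmul (c \<gamma>) (pdiffs \<gamma> f))))"

definition polydiff :: "('v::finite) ser set \<Rightarrow> nat \<Rightarrow> ((nat \<Rightarrow> 'v ser) \<Rightarrow> 'v ser) \<Rightarrow> bool" where
  "polydiff R k \<psi> \<longleftrightarrow> (\<exists>(N::nat) Ds. (\<forall>i j. diffop R (Ds i j)) \<and>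
       (\<forall>fs. (\<forall>j<k. fs j \<in> R) \<longrightarrow> \<psi> fs = (\<Sum>i<N. mprod k (\<lambda>j. Ds i j (fs j)))))"

text \<open>Hamiltonian vector field xi_h = {h,-}, with Poisson bracket
  {f,g} = sum_{a,b} \<pi> a b (d_a f)(d_b g), \<pi> the Poisson bivector (inverse of \<omega>).\<close>
definition ham :: "('v::finite \<Rightarrow> 'v \<Rightarrow> complex) \<Rightarrow> 'v ser \<Rightarrow> 'v ser \<Rightarrow> 'v ser" where
  "ham \<pi> h f = (\<Sum>a\<in>UNIV. \<Sum>b\<in>UNIV. cscale (\<pi> a b) (cmul (pdiff a h) (pdiff b f)))"

definition symmetric_op :: "'v ser set \<Rightarrow> nat \<Rightarrow> ((nat \<Rightarrow> 'v ser) \<Rightarrow> 'v ser) \<Rightarrow> bool" where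
  "symmetric_op R k \<psi> \<longleftrightarrow> (\<forall>\<sigma> fs. bij_betw \<sigma> {..<k} {..<k} \<longrightarrow> (\<forall>j<k. fs j \<in> R) \<longrightarrow>
       \<psi> (fs \<circ> \<sigma>) = \<psi> fs)"

definition ham_invariant :: "('v::finite \<Rightarrow> 'v \<Rightarrow> complex) \<Rightarrow> 'v ser set \<Rightarrow> nat \<Rightarrow>
    ((nat \<Rightarrow> 'v ser) \<Rightarrow> 'v ser) \<Rightarrow> bool" where
  "ham_invariant \<pi> R k \<psi> \<longleftrightarrow> (\<forall>h fs. h \<in> R \<longrightarrow> (\<forall>j<k. fs j \<in> R) \<longrightarrow>
       ham \<pi> h (\<psi> fs) = (\<Sum>j<k. \<psi> (fs(j := ham \<pi> h (fs j)))))"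

end

theory Submission
  imports Defs "HOL-Library.FuncSet"
begin


lemma zero_fun_eta: "(\<lambda>x. 0) = (0::'a\<Rightarrow>'b::zero)"
  by (simp add: zero_fun_def)
lemma plus_fun_eta: "(\<lambda>x. f x + g x) = f + (g::'a\<Rightarrow>'b::plus)"
  by (simp add: plus_fun_def)

lemma sum_fun_apply: "(\<Sum>a\<in>A. F a) x = (\<Sum>a\<in>A. F a x)"
  by (induction A rule: infinite_finite_induct) auto

lemma finite_B: "finite {\<beta>::'v::finite\<Rightarrow>nat. \<beta> \<le> \<alpha>}"
proof -
  have "{\<beta>::'v\<Rightarrow>nat. \<beta> \<le> \<alpha>} = PiE UNIV (\<lambda>v. {..\<alpha> v})"
    by (auto simp: le_fun_def PiE_def Pi_def extensional_def)
  thus ?thesis by (simp add: finite_PiE)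
qed

definition P :: "('v \<Rightarrow> nat) \<Rightarrow> (('v \<Rightarrow> nat) \<times> ('v \<Rightarrow> nat)) set" where
  "P \<alpha> = {p. fst p + snd p = \<alpha>}"

lemma P_le: "p \<in> P \<alpha> \<Longrightarrow> fst p \<le> \<alpha> \<and> snd p \<le> \<alpha>"
  by (auto simp: P_def le_fun_def)

lemma finite_P: "finite (P (\<alpha>::'v::finite\<Rightarrow>nat))"
proof -
  have "P \<alpha> \<subseteq> {\<beta>. \<beta> \<le> \<alpha>} \<times> {\<beta>. \<beta> \<le> \<alpha>}" using P_le by fastforce
  thus ?thesis by (rule finite_subset) (simp add: finite_B)
qed

lemma cmul_P: "cmul f g \<alpha> = (\<Sum>p\<in>P \<alpha>. f (fst p) * g (snd p))"
  unfolding cmul_def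
  apply (rule sum.reindex_bij_witness[where i = fst and j = "\<lambda>\<beta>. (\<beta>, \<lambda>v. \<alpha> v - \<beta> v)"])
  apply (auto simp: P_def le_fun_def fun_eq_iff)
   apply (metis add_diff_cancel_left')
  apply (metis le_add1)
  done

lemma cmul_comm: "cmul f g = cmul g f"
proof
  fix \<alpha>
  show "cmul f g \<alpha> = cmul g f \<alpha>" unfolding cmul_P
    by (rule sum.reindex_bij_witness[where i = "\<lambda>p. (snd p, fst p)" and j = "\<lambda>p. (snd p, fst p)"])
       (auto simp: P_def add.commute)
qed

lemma cmul_sone: "cmul sone f = f"
proof
  fix \<alpha>
  have "cmul sone f \<alpha> = (\<Sum>p\<in>P \<alpha>. if p = (0, \<alpha>) then f \<alpha> else 0)"
    unfolding cmul_P by (rule sum.cong) (auto simp: sone_def P_def zero_fun_def)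
  also have "\<dots> = f \<alpha>" using finite_P[of \<alpha>] by (simp add: P_def)
  finally show "cmul sone f \<alpha> = f \<alpha>" .
qed

lemma cmul_assoc: "cmul (cmul f g) h = cmul f (cmul g h)"
proof
  fix \<alpha> :: "'a::finite \<Rightarrow> nat"
  define T where "T = {t::('a\<Rightarrow>nat)\<times>('a\<Rightarrow>nat)\<times>('a\<Rightarrow>nat). fst t + fst (snd t) + snd (snd t) = \<alpha>}"
  have "cmul (cmul f g) h \<alpha> = (\<Sum>p\<in>P \<alpha>. \<Sum>q\<in>P (fst p). f (fst q) * g (snd q) * h (snd p))"
    unfolding cmul_P by (simp add: sum_distrib_right)
  also have "\<dots> = (\<Sum>pq\<in>Sigma (P \<alpha>) (\<lambda>p. P (fst p)). f (fst (snd pq)) * g (snd (snd pq)) * h (snd (fst pq)))"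
    by (subst sum.Sigma) (auto simp: finite_P split_def)
  also have "\<dots> = (\<Sum>t\<in>T. f (fst t) * g (fst (snd t)) * h (snd (snd t)))"
    by (rule sum.reindex_bij_witness[where i = "\<lambda>t. ((fst t + fst (snd t), snd (snd t)), (fst t, fst (snd t)))"
          and j = "\<lambda>pq. (fst (snd pq), snd (snd pq), snd (fst pq))"]) (auto simp: T_def P_def)
  finally have L: "cmul (cmul f g) h \<alpha> = (\<Sum>t\<in>T. f (fst t) * g (fst (snd t)) * h (snd (snd t)))" .
  have "cmul f (cmul g h) \<alpha> = (\<Sum>p\<in>P \<alpha>. \<Sum>q\<in>P (snd p). f (fst p) * g (fst q) * h (snd q))"
    unfolding cmul_P by (simp add: sum_distrib_left mult.assoc)
  also have "\<dots> = (\<Sum>pq\<in>Sigma (P \<alpha>) (\<lambda>p. P (snd p)). f (fst (fst pq)) * g (fst (snd pq)) * h (snd (snd pq)))"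
    by (subst sum.Sigma) (auto simp: finite_P split_def)
  also have "\<dots> = (\<Sum>t\<in>T. f (fst t) * g (fst (snd t)) * h (snd (snd t)))"
    by (rule sum.reindex_bij_witness[where i = "\<lambda>t. ((fst t, fst (snd t) + snd (snd t)), (fst (snd t), snd (snd t)))"
          and j = "\<lambda>pq. (fst (fst pq), fst (snd pq), snd (snd pq))"]) (auto simp: T_def P_def add.assoc)
  finally show "cmul (cmul f g) h \<alpha> = cmul f (cmul g h) \<alpha>" using L by simp
qed

lemma cmul_add_left: "cmul (f + g) h = cmul f h + cmul g h"
  by (auto simp: cmul_def fun_eq_iff distrib_right sum.distrib)
lemma cmul_add_right: "cmul h (f + g) = cmul h f + cmul h g"
  by (auto simp: cmul_def fun_eq_iff distrib_left sum.distrib)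
lemma cmul_zero_left[simp]: "cmul 0 g = 0"
  by (auto simp: cmul_def fun_eq_iff)
lemma cmul_zero_right[simp]: "cmul g 0 = 0"
  by (auto simp: cmul_def fun_eq_iff)
lemma cmul_sum_left: "cmul (\<Sum>i\<in>I. G i) h = (\<Sum>i\<in>I. cmul (G i) h)"
  unfolding fun_eq_iff cmul_def sum_fun_apply sum_distrib_right by (intro allI sum.swap)
lemma cmul_sum_right: "cmul h (\<Sum>i\<in>I. G i) = (\<Sum>i\<in>I. cmul h (G i))"
  unfolding fun_eq_iff cmul_def sum_fun_apply sum_distrib_left by (intro allI sum.swap)
lemma cmul_cscale_left: "cmul (cscale c f) g = cscale c (cmul f g)"
  by (auto simp: cmul_def cscale_def fun_eq_iff sum_distrib_left mult.assoc)
lemma cmul_cscale_right: "cmul g (cscale c f) = cscale c (cmul g f)"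
  by (auto simp: cmul_def cscale_def fun_eq_iff sum_distrib_left mult.left_commute)
lemma cmul_sone_right: "cmul f sone = f"
  by (simp add: cmul_comm cmul_sone)
lemma cmul_at0: "cmul f g 0 = f 0 * g 0"
proof -
  have "{\<beta>::'a\<Rightarrow>nat. \<beta> \<le> 0} = {0}" by (auto simp: le_fun_def fun_eq_iff)
  thus ?thesis by (simp add: cmul_def zero_fun_def)
qed

lemma cscale_add: "cscale c (f + g) = cscale c f + cscale c g"
  by (auto simp: cscale_def fun_eq_iff distrib_left)
lemma cscale_sum: "cscale c (\<Sum>i\<in>I. G i) = (\<Sum>i\<in>I. cscale c (G i))"
  unfolding fun_eq_iff cscale_def sum_fun_apply sum_distrib_left by simp
lemma cscale_cscale: "cscale a (cscale b f) = cscale (a*b) f"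
  by (auto simp: cscale_def)
lemma cscale_zero[simp]: "cscale c 0 = 0"
  by (auto simp: cscale_def)

definition ub :: "'v \<Rightarrow> 'v \<Rightarrow> nat" where "ub b = (\<lambda>v. if v = b then 1 else 0)"

lemma upd_ub: "\<alpha>(b := \<alpha> b + 1) = \<alpha> + ub b"
  by (auto simp: ub_def fun_eq_iff)

lemma pdiff_alt: "pdiff b f \<alpha> = of_nat (\<alpha> b + 1) * f (\<alpha> + ub b)"
  unfolding pdiff_def upd_ub by simp

lemma pdiff_add: "pdiff a (f + g) = pdiff a f + pdiff a g"
  by (auto simp: pdiff_def fun_eq_iff distrib_left)
lemma pdiff_sum: "pdiff a (\<Sum>i\<in>I. G i) = (\<Sum>i\<in>I. pdiff a (G i))"
  unfolding fun_eq_iff pdiff_def sum_fun_apply sum_distrib_left by simp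
lemma pdiff_cscale: "pdiff a (cscale c f) = cscale c (pdiff a f)"
  by (auto simp: pdiff_def cscale_def fun_eq_iff)
lemma pdiff_zero[simp]: "pdiff a 0 = 0"
  by (auto simp: pdiff_def fun_eq_iff)
lemma pdiff_sone[simp]: "pdiff a sone = 0"
  by (auto simp: pdiff_def sone_def fun_eq_iff)

lemma reindex_shift:
  fixes F :: "('v::finite\<Rightarrow>nat)\<times>('v\<Rightarrow>nat) \<Rightarrow> complex"
  shows "(\<Sum>p\<in>P \<alpha>. F (fst p + ub b, snd p)) = (\<Sum>q\<in>{q\<in>P (\<alpha> + ub b). fst q b \<noteq> 0}. F q)"
  apply (rule sum.reindex_bij_witness[where i = "\<lambda>q. (fst q - ub b, snd q)" and j = "\<lambda>p. (fst p + ub b, snd p)"])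
  apply (auto simp: P_def ub_def fun_eq_iff)
  done

lemma pdiff_cmul: "pdiff b (cmul f g) = cmul (pdiff b f) g + cmul f (pdiff b g)"
proof
  fix \<alpha> :: "'a::finite \<Rightarrow> nat"
  define M where "M = \<alpha> + ub b"
  have Mb: "M b = \<alpha> b + 1" by (simp add: M_def ub_def)
  have 1: "cmul (pdiff b f) g \<alpha> = (\<Sum>q\<in>P M. of_nat (fst q b) * f (fst q) * g (snd q))"
  proof -
    have "cmul (pdiff b f) g \<alpha> = (\<Sum>p\<in>P \<alpha>. (\<lambda>q. of_nat (fst q b) * f (fst q) * g (snd q)) (fst p + ub b, snd p))"
      unfolding cmul_P pdiff_alt by (rule sum.cong) (auto simp: ub_def)
    also have "\<dots> = (\<Sum>q\<in>{q\<in>P M. fst q b \<noteq> 0}. of_nat (fst q b) * f (fst q) * g (snd q))"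
      unfolding M_def by (rule reindex_shift)
    also have "\<dots> = (\<Sum>q\<in>P M. of_nat (fst q b) * f (fst q) * g (snd q))"
      by (rule sum.mono_neutral_left) (auto simp: finite_P)
    finally show ?thesis .
  qed
  have 2: "cmul f (pdiff b g) \<alpha> = (\<Sum>q\<in>P M. of_nat (snd q b) * f (fst q) * g (snd q))"
  proof -
    have "cmul f (pdiff b g) \<alpha> = cmul (pdiff b g) f \<alpha>" by (simp add: cmul_comm)
    also have "\<dots> = (\<Sum>q\<in>P M. of_nat (fst q b) * g (fst q) * f (snd q))"
    proof -
      have "cmul (pdiff b g) f \<alpha> = (\<Sum>p\<in>P \<alpha>. (\<lambda>q. of_nat (fst q b) * g (fst q) * f (snd q)) (fst p + ub b, snd p))"
        unfolding cmul_P pdiff_alt by (rule sum.cong) (auto simp: ub_def)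
      also have "\<dots> = (\<Sum>q\<in>{q\<in>P M. fst q b \<noteq> 0}. of_nat (fst q b) * g (fst q) * f (snd q))"
        unfolding M_def by (rule reindex_shift)
      also have "\<dots> = (\<Sum>q\<in>P M. of_nat (fst q b) * g (fst q) * f (snd q))"
        by (rule sum.mono_neutral_left) (auto simp: finite_P)
      finally show ?thesis .
    qed
    also have "\<dots> = (\<Sum>q\<in>P M. of_nat (snd q b) * f (fst q) * g (snd q))"
      by (rule sum.reindex_bij_witness[where i = "\<lambda>p. (snd p, fst p)" and j = "\<lambda>p. (snd p, fst p)"])
         (auto simp: P_def add.commute)
    finally show ?thesis .
  qed
  have "pdiff b (cmul f g) \<alpha> = (\<Sum>q\<in>P M. of_nat (M b) * (f (fst q) * g (snd q)))"
    by (simp add: pdiff_alt cmul_P M_def[symmetric] Mb sum_distrib_left)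
  also have "\<dots> = (\<Sum>q\<in>P M. of_nat (fst q b) * f (fst q) * g (snd q) + of_nat (snd q b) * f (fst q) * g (snd q))"
  proof (rule sum.cong)
    fix q assume "q \<in> P M"
    hence "fst q b + snd q b = M b" by (auto simp: P_def)
    hence "(of_nat (M b)::complex) = of_nat (fst q b) + of_nat (snd q b)" by (metis of_nat_add)
    thus "of_nat (M b) * (f (fst q) * g (snd q)) = of_nat (fst q b) * f (fst q) * g (snd q) + of_nat (snd q b) * f (fst q) * g (snd q)"
      by (simp add: algebra_simps)
  qed simp
  also have "\<dots> = (cmul (pdiff b f) g + cmul f (pdiff b g)) \<alpha>"
    by (simp add: 1 2 sum.distrib)
  finally show "pdiff b (cmul f g) \<alpha> = (cmul (pdiff b f) g + cmul f (pdiff b g)) \<alpha>" .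
qed




lemma cmul_left_commute: "cmul a (cmul b c) = cmul b (cmul a c)"
  by (simp only: cmul_assoc[symmetric] cmul_comm[of a b])

interpretation cmp: comm_monoid_set "cmul :: ('v::finite) ser \<Rightarrow> _ \<Rightarrow> _" sone
  apply unfold_locales
    apply (rule cmul_assoc)
   apply (rule cmul_comm)
  apply (rule cmul_sone_right)
  done


lemma mprod_F: "mprod k F = cmp.F F {..<k}"
  by (induction k) (auto simp: lessThan_Suc cmp.insert cmul_comm)

lemma mprod_cong: "(\<And>j. j < k \<Longrightarrow> F j = G j) \<Longrightarrow> mprod k F = mprod k G"
  unfolding mprod_F by (rule cmp.cong) auto

lemma mprod_perm: "bij_betw \<sigma> {..<k} {..<k} \<Longrightarrow> mprod k (F \<circ> \<sigma>) = mprod k F"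
  unfolding mprod_F comp_def by (rule cmp.reindex_bij_betw)

lemma sone_at0[simp]: "sone 0 = 1"
  by (simp add: sone_def zero_fun_def)

lemma mprod_at0: "mprod k F 0 = (\<Prod>j<k. F j 0)"
  by (induction k) (auto simp: cmul_at0 zero_fun_eta)


lemma mprod_deriv:
  assumes D: "\<And>f g. D (cmul f g) = cmul (D f) g + cmul f (D g)" and D1: "D sone = 0"
  shows "D (mprod k F) = (\<Sum>j<k. mprod k (F(j := D (F j))))"
proof (induction k)
  case 0 thus ?case by (simp add: D1)
next
  case (Suc k)
  have "D (mprod (Suc k) F) = cmul (D (mprod k F)) (F k) + cmul (mprod k F) (D (F k))"
    by (simp add: D)
  also have "cmul (D (mprod k F)) (F k) = (\<Sum>j<k. mprod (Suc k) (F(j := D (F j))))"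
    unfolding Suc cmul_sum_left by (rule sum.cong) auto
  also have "cmul (mprod k F) (D (F k)) = mprod (Suc k) (F(k := D (F k)))"
    using mprod_cong[of k "F(k := D (F k))" F] by simp
  finally show ?case by (simp only: sum.lessThan_Suc add.commute)
qed

lemma ham_add: "ham \<pi> h (f + g) = ham \<pi> h f + ham \<pi> h g"
  by (simp add: ham_def pdiff_add cmul_add_right cscale_add sum.distrib)

lemma ham_cscale: "ham \<pi> h (cscale c f) = cscale c (ham \<pi> h f)"
  by (simp add: ham_def pdiff_cscale cmul_cscale_right cscale_cscale cscale_sum mult.commute)

lemma ham_sone[simp]: "ham \<pi> h sone = 0"
  by (simp add: ham_def)


lemma ham_zero[simp]: "ham \<pi> h 0 = 0"
  by (simp add: ham_def)

lemma ham_sum: "ham \<pi> h (\<Sum>i\<in>I. G i) = (\<Sum>i\<in>I. ham \<pi> h (G i))"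
proof -
  have "ham \<pi> h (\<Sum>i\<in>I. G i) = (\<Sum>a\<in>UNIV. \<Sum>b\<in>UNIV. \<Sum>i\<in>I. cscale (\<pi> a b) (cmul (pdiff a h) (pdiff b (G i))))"
    unfolding ham_def pdiff_sum cmul_sum_right cscale_sum ..
  also have "\<dots> = (\<Sum>a\<in>UNIV. \<Sum>i\<in>I. \<Sum>b\<in>UNIV. cscale (\<pi> a b) (cmul (pdiff a h) (pdiff b (G i))))"
    by (rule sum.cong[OF refl], rule sum.swap)
  also have "\<dots> = (\<Sum>i\<in>I. \<Sum>a\<in>UNIV. \<Sum>b\<in>UNIV. cscale (\<pi> a b) (cmul (pdiff a h) (pdiff b (G i))))"
    by (rule sum.swap)
  finally show ?thesis unfolding ham_def .
qed

lemma ham_cmul: "ham \<pi> h (cmul f g) = cmul (ham \<pi> h f) g + cmul f (ham \<pi> h g)"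
proof -
  have "ham \<pi> h (cmul f g) = (\<Sum>a\<in>UNIV. \<Sum>b\<in>UNIV. cscale (\<pi> a b) (cmul (cmul (pdiff a h) (pdiff b f)) g)
          + cscale (\<pi> a b) (cmul f (cmul (pdiff a h) (pdiff b g))))"
    unfolding ham_def
  proof (intro sum.cong refl)
    fix a b
    show "cscale (\<pi> a b) (cmul (pdiff a h) (pdiff b (cmul f g))) =
      cscale (\<pi> a b) (cmul (cmul (pdiff a h) (pdiff b f)) g) + cscale (\<pi> a b) (cmul f (cmul (pdiff a h) (pdiff b g)))"
      by (simp only: pdiff_cmul cmul_add_right cscale_add cmul_assoc cmul_left_commute[of "pdiff a h" f])
  qed
  also have "\<dots> = cmul (ham \<pi> h f) g + cmul f (ham \<pi> h g)"
    by (simp add: ham_def sum.distrib cmul_sum_left cmul_sum_right cmul_cscale_left cmul_cscale_right)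
  finally show ?thesis .
qed

lemma ham_mprod: "ham \<pi> h (mprod k F) = (\<Sum>j<k. mprod k (F(j := ham \<pi> h (F j))))"
  by (rule mprod_deriv[where D = "ham \<pi> h"]) (simp_all add: ham_cmul)

lemma pdiff_mprod: "pdiff b (mprod k F) = (\<Sum>j<k. mprod k (F(j := pdiff b (F j))))"
  by (rule mprod_deriv[where D = "pdiff b"]) (simp_all add: pdiff_cmul)




definition lin :: "('v \<Rightarrow> complex) \<Rightarrow> 'v ser" where
  "lin w = (\<lambda>\<alpha>. \<Sum>a\<in>UNIV. if \<alpha> = ub a then w a else 0)"

definition integ :: "'v \<Rightarrow> 'v ser \<Rightarrow> 'v ser" where
  "integ c g = (\<lambda>\<alpha>. if \<alpha> c = 0 then 0 else g (\<alpha>(c := \<alpha> c - 1)) / of_nat (\<alpha> c))"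

lemma add_ub_eq_ub: "(\<alpha> + ub a = ub d) \<longleftrightarrow> (\<alpha> = 0 \<and> d = a)"
proof
  assume h: "\<alpha> + ub a = ub d"
  have "\<alpha> a + 1 = ub d a" using fun_cong[OF h, of a] by (simp add: ub_def)
  hence da: "d = a" and "\<alpha> a = 0" by (auto simp: ub_def split: if_splits)
  moreover have "\<alpha> v = 0" if "v \<noteq> a" for v using fun_cong[OF h, of v] that da by (simp add: ub_def)
  ultimately show "\<alpha> = 0 \<and> d = a" by (metis zero_fun_apply ext)
qed (auto simp: ub_def)

lemma lin_at0[simp]: "lin w 0 = 0"
proof -
  have "(0::'a\<Rightarrow>nat) \<noteq> ub a" for a by (auto simp: ub_def fun_eq_iff)
  thus ?thesis by (simp add: lin_def)
qed

lemma pdiff_lin: "pdiff a (lin (w::'v::finite \<Rightarrow> complex)) = cscale (w a) sone"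
proof
  fix \<alpha> :: "'v \<Rightarrow> nat"
  have "pdiff a (lin w) \<alpha> = of_nat (\<alpha> a + 1) * (\<Sum>d\<in>UNIV. if \<alpha> = 0 \<and> d = a then w d else 0)"
    by (simp add: pdiff_alt lin_def add_ub_eq_ub)
  also have "\<dots> = cscale (w a) sone \<alpha>"
    by (cases "\<alpha> = 0") (auto simp: cscale_def sone_def zero_fun_def)
  finally show "pdiff a (lin w) \<alpha> = cscale (w a) sone \<alpha>" .
qed

lemma cmul_cscale_sone: "cmul f (cscale w sone) = cscale w f"
  by (simp add: cmul_cscale_right cmul_sone_right)

lemma ham_lin_apply: "ham \<pi> (lin w) f \<alpha> = (\<Sum>d\<in>UNIV. (\<Sum>a\<in>UNIV. \<pi> a d * w a) * pdiff d f \<alpha>)"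
proof -
  have "ham \<pi> (lin w) f \<alpha> = (\<Sum>a\<in>UNIV. \<Sum>d\<in>UNIV. \<pi> a d * w a * pdiff d f \<alpha>)"
    unfolding ham_def sum_fun_apply pdiff_lin cmul_cscale_left cmul_sone by (simp add: cscale_def mult.assoc)
  also have "\<dots> = (\<Sum>d\<in>UNIV. \<Sum>a\<in>UNIV. \<pi> a d * w a * pdiff d f \<alpha>)" by (rule sum.swap)
  also have "\<dots> = (\<Sum>d\<in>UNIV. (\<Sum>a\<in>UNIV. \<pi> a d * w a) * pdiff d f \<alpha>)"
    by (simp add: sum_distrib_right)
  finally show ?thesis .
qed

lemma pdiff_as_ham:
  assumes inv1: "\<forall>a c. (\<Sum>b\<in>UNIV. \<omega> a b * \<pi> b c) = (if a = c then 1 else 0)"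
  shows "ham \<pi> (lin (\<lambda>a. \<omega> b a)) f = pdiff b f"
proof
  fix \<alpha>
  have "ham \<pi> (lin (\<lambda>a. \<omega> b a)) f \<alpha> = (\<Sum>d\<in>UNIV. (if b = d then 1 else 0) * pdiff d f \<alpha>)"
    unfolding ham_lin_apply using inv1 by (simp add: mult.commute)
  also have "\<dots> = (\<Sum>d\<in>UNIV. if b = d then pdiff d f \<alpha> else 0)" by (rule sum.cong) auto
  also have "\<dots> = pdiff b f \<alpha>" by simp
  finally show "ham \<pi> (lin (\<lambda>a. \<omega> b a)) f \<alpha> = pdiff b f \<alpha>" .
qed

lemma ham_z:
  assumes inv2: "\<forall>a c. (\<Sum>b\<in>UNIV. \<pi> a b * \<omega> b c) = (if a = c then 1 else 0)"
  shows "ham \<pi> H (lin (\<lambda>b. \<omega> b c)) = pdiff c H"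
proof
  fix \<alpha>
  have "ham \<pi> H (lin (\<lambda>b. \<omega> b c)) \<alpha> = (\<Sum>a\<in>UNIV. \<Sum>d\<in>UNIV. \<pi> a d * \<omega> d c * pdiff a H \<alpha>)"
    unfolding ham_def sum_fun_apply pdiff_lin cmul_cscale_sone by (simp add: cscale_def mult.assoc mult.left_commute)
  also have "\<dots> = (\<Sum>a\<in>UNIV. (if a = c then 1 else 0) * pdiff a H \<alpha>)"
    using inv2 by (simp add: sum_distrib_right[symmetric])
  also have "\<dots> = (\<Sum>a\<in>UNIV. if a = c then pdiff a H \<alpha> else 0)" by (rule sum.cong) auto
  also have "\<dots> = pdiff c H \<alpha>" by simp
  finally show "ham \<pi> H (lin (\<lambda>b. \<omega> b c)) \<alpha> = pdiff c H \<alpha>" .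
qed

lemma ham_at0: "(\<And>a. H (ub a) = 0) \<Longrightarrow> ham \<pi> H f 0 = 0"
  by (simp add: ham_def sum_fun_apply cscale_def cmul_at0 pdiff_alt)

lemma pdiff_integ: "pdiff c (integ c g) = g"
proof
  fix \<alpha> :: "'a \<Rightarrow> nat"
  have e: "(\<alpha> + ub c)(c := \<alpha> c) = \<alpha>" by (auto simp: ub_def fun_eq_iff)
  have e2: "(\<alpha> + ub c) c = \<alpha> c + 1" by (simp add: ub_def)
  have "pdiff c (integ c g) \<alpha> = of_nat (\<alpha> c + 1) * (g \<alpha> / of_nat (\<alpha> c + 1))"
    unfolding pdiff_alt integ_def e2 by (simp add: e del: of_nat_Suc)
  thus "pdiff c (integ c g) \<alpha> = g \<alpha>" by (simp del: of_nat_Suc)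
qed

lemma integ_ub: "g 0 = 0 \<Longrightarrow> integ c g (ub a) = 0"
proof -
  assume g0: "g 0 = 0"
  have "(ub c)(c := 0) = 0" by (auto simp: ub_def fun_eq_iff)
  thus ?thesis using g0 by (auto simp: integ_def ub_def)
qed




lemma poly_add: "is_poly f \<Longrightarrow> is_poly g \<Longrightarrow> is_poly (f + g)"
  unfolding is_poly_def by (rule finite_subset[of _ "{\<alpha>. f \<alpha> \<noteq> 0} \<union> {\<alpha>. g \<alpha> \<noteq> 0}"]) auto

lemma poly_zero: "is_poly 0"
  by (simp add: is_poly_def)

lemma poly_sum: "(\<And>i. i \<in> I \<Longrightarrow> is_poly (G i)) \<Longrightarrow> is_poly (\<Sum>i\<in>I. G i)"
proof (cases "finite I")
  case False thus ?thesis by (simp add: poly_zero)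
next
  case True
  assume G: "\<And>i. i \<in> I \<Longrightarrow> is_poly (G i)"
  have "{\<alpha>. (\<Sum>i\<in>I. G i) \<alpha> \<noteq> 0} \<subseteq> (\<Union>i\<in>I. {\<alpha>. G i \<alpha> \<noteq> 0})"
  proof
    fix \<alpha> assume "\<alpha> \<in> {\<alpha>. (\<Sum>i\<in>I. G i) \<alpha> \<noteq> 0}"
    hence "(\<Sum>i\<in>I. G i \<alpha>) \<noteq> 0" by (simp add: sum_fun_apply)
    then obtain i where "i \<in> I" "G i \<alpha> \<noteq> 0" by (rule sum.not_neutral_contains_not_neutral)
    thus "\<alpha> \<in> (\<Union>i\<in>I. {\<alpha>. G i \<alpha> \<noteq> 0})" by blast
  qed
  moreover have "finite (\<Union>i\<in>I. {\<alpha>. G i \<alpha> \<noteq> 0})" using True G unfolding is_poly_def by blast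
  ultimately show ?thesis unfolding is_poly_def by (rule finite_subset)
qed

lemma poly_cscale: "is_poly f \<Longrightarrow> is_poly (cscale c f)"
  unfolding is_poly_def cscale_def by (rule finite_subset[of _ "{\<alpha>. f \<alpha> \<noteq> 0}"]) auto

lemma poly_sone: "is_poly sone"
  unfolding is_poly_def sone_def by (rule finite_subset[of _ "{0}"]) (auto simp: zero_fun_def)

lemma poly_lin: "is_poly (lin (w::'v::finite \<Rightarrow> complex))"
proof -
  have "{\<alpha>. lin w \<alpha> \<noteq> 0} \<subseteq> range ub"
  proof
    fix \<alpha> assume a: "\<alpha> \<in> {\<alpha>. lin w \<alpha> \<noteq> 0}"
    show "\<alpha> \<in> range ub"
    proof (rule ccontr)
      assume "\<alpha> \<notin> range ub"
      hence "lin w \<alpha> = 0" unfolding lin_def by (intro sum.neutral) auto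
      thus False using a by simp
    qed
  qed
  thus ?thesis unfolding is_poly_def by (rule finite_subset) simp
qed

lemma inj_add_ub: "inj (\<lambda>\<alpha>::'v\<Rightarrow>nat. \<alpha> + ub a)"
  by (auto simp: inj_def fun_eq_iff)

lemma poly_pdiff: "is_poly f \<Longrightarrow> is_poly (pdiff a f)"
proof -
  assume f: "is_poly f"
  have "{\<alpha>. pdiff a f \<alpha> \<noteq> 0} \<subseteq> (\<lambda>\<alpha>. \<alpha> + ub a) -` {\<alpha>. f \<alpha> \<noteq> 0}"
    by (auto simp: pdiff_alt)
  moreover have "finite ((\<lambda>\<alpha>. \<alpha> + ub a) -` {\<alpha>. f \<alpha> \<noteq> 0})"
    using f unfolding is_poly_def by (rule finite_vimageI) (rule inj_add_ub)
  ultimately show ?thesis unfolding is_poly_def by (rule finite_subset)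
qed

lemma poly_integ: "is_poly g \<Longrightarrow> is_poly (integ c g)"
proof -
  assume g: "is_poly g"
  have "{\<alpha>. integ c g \<alpha> \<noteq> 0} \<subseteq> (\<lambda>\<alpha>. \<alpha> + ub c) ` {\<alpha>. g \<alpha> \<noteq> 0}"
  proof
    fix \<alpha> assume "\<alpha> \<in> {\<alpha>. integ c g \<alpha> \<noteq> 0}"
    hence a: "\<alpha> c \<noteq> 0" "g (\<alpha>(c := \<alpha> c - 1)) \<noteq> 0" by (auto simp: integ_def split: if_splits)
    have "\<alpha> = \<alpha>(c := \<alpha> c - 1) + ub c" using a(1) by (auto simp: fun_eq_iff ub_def)
    thus "\<alpha> \<in> (\<lambda>\<alpha>. \<alpha> + ub c) ` {\<alpha>. g \<alpha> \<noteq> 0}" using a(2) by blast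
  qed
  thus ?thesis using g unfolding is_poly_def by (meson finite_subset finite_imageI)
qed

lemma poly_cmul: "is_poly f \<Longrightarrow> is_poly g \<Longrightarrow> is_poly (cmul (f::'v::finite ser) g)"
proof -
  assume f: "is_poly f" and g: "is_poly g"
  have "{\<alpha>. cmul f g \<alpha> \<noteq> 0} \<subseteq> (\<lambda>p. fst p + snd p) ` ({\<alpha>. f \<alpha> \<noteq> 0} \<times> {\<alpha>. g \<alpha> \<noteq> 0})"
  proof
    fix \<alpha> assume "\<alpha> \<in> {\<alpha>. cmul f g \<alpha> \<noteq> 0}"
    hence "(\<Sum>p\<in>P \<alpha>. f (fst p) * g (snd p)) \<noteq> 0" by (simp add: cmul_P)
    then obtain p where p: "p \<in> P \<alpha>" "f (fst p) * g (snd p) \<noteq> 0" by (rule sum.not_neutral_contains_not_neutral)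
    thus "\<alpha> \<in> (\<lambda>p. fst p + snd p) ` ({\<alpha>. f \<alpha> \<noteq> 0} \<times> {\<alpha>. g \<alpha> \<noteq> 0})"
      by (intro image_eqI[of _ _ p]) (auto simp: P_def mem_Times_iff)
  qed
  thus ?thesis using f g unfolding is_poly_def by (meson finite_subset finite_imageI finite_SigmaI)
qed

lemma poly_ham: "is_poly h \<Longrightarrow> is_poly f \<Longrightarrow> is_poly (ham \<pi> h (f::'v::finite ser))"
  unfolding ham_def by (intro poly_sum poly_cscale poly_cmul poly_pdiff)

definition goodR :: "'v ser set \<Rightarrow> bool" where
  "goodR R \<longleftrightarrow> R = {f. is_poly f} \<or> R = UNIV"

lemma gR_add: "goodR R \<Longrightarrow> f \<in> R \<Longrightarrow> g \<in> R \<Longrightarrow> f + g \<in> R"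
  unfolding goodR_def using poly_add by auto
lemma gR_cscale: "goodR R \<Longrightarrow> f \<in> R \<Longrightarrow> cscale c f \<in> R"
  unfolding goodR_def using poly_cscale by auto
lemma gR_sone: "goodR R \<Longrightarrow> sone \<in> R"
  unfolding goodR_def using poly_sone by auto
lemma gR_lin: "goodR R \<Longrightarrow> lin (w::'v::finite\<Rightarrow>complex) \<in> R"
  unfolding goodR_def using poly_lin by auto
lemma gR_pdiff: "goodR R \<Longrightarrow> f \<in> R \<Longrightarrow> pdiff a f \<in> R"
  unfolding goodR_def using poly_pdiff by auto
lemma gR_integ: "goodR R \<Longrightarrow> f \<in> R \<Longrightarrow> integ c f \<in> R"
  unfolding goodR_def using poly_integ by auto
lemma gR_ham: "goodR R \<Longrightarrow> h \<in> R \<Longrightarrow> f \<in> R \<Longrightarrow> ham \<pi> h (f::'v::finite ser) \<in> R"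
  unfolding goodR_def using poly_ham by auto




definition sw :: "nat \<Rightarrow> nat \<Rightarrow> nat \<Rightarrow> nat" where
  "sw i j = (\<lambda>l. if l = i then j else if l = j then i else l)"

lemma bij_sw: "i < k \<Longrightarrow> j < k \<Longrightarrow> bij_betw (sw i j) {..<k} {..<k}"
  by (rule bij_betw_byWitness[where f' = "sw i j"]) (auto simp: sw_def)

lemma sum_if_const: "finite A \<Longrightarrow> (\<Sum>j\<in>A. if Q j then (c::complex) else 0) = of_nat (card {j\<in>A. Q j}) * c"
  by (simp add: sum.inter_filter[symmetric])

locale coreK =
  fixes K :: "(nat \<Rightarrow> ('v::finite) ser) \<Rightarrow> complex" and k :: nat and R :: "'v ser set"
    and \<pi> \<omega> :: "'v \<Rightarrow> 'v \<Rightarrow> complex"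
  assumes gR: "goodR R"
    and Kadd: "\<And>fs j f g. j < k \<Longrightarrow> K (fs(j := f + g)) = K (fs(j := f)) + K (fs(j := g))"
    and Kscl: "\<And>fs j a f. j < k \<Longrightarrow> K (fs(j := cscale a f)) = a * K (fs(j := f))"
    and Kcong: "\<And>fs gs. (\<And>j. j < k \<Longrightarrow> fs j = gs j) \<Longrightarrow> K fs = K gs"
    and Ksym: "\<And>fs i j. (\<And>l. l < k \<Longrightarrow> fs l \<in> R) \<Longrightarrow> i < k \<Longrightarrow> j < k \<Longrightarrow> K (fs \<circ> sw i j) = K fs"
    and Kinv: "\<And>H gs. H \<in> R \<Longrightarrow> (\<And>a. H (ub a) = 0) \<Longrightarrow> (\<And>l. l < k \<Longrightarrow> gs l \<in> R) \<Longrightarrow>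
                 (\<Sum>j<k. K (gs(j := ham \<pi> H (gs j)))) = 0"
    and inv2: "\<forall>a c. (\<Sum>b\<in>UNIV. \<pi> a b * \<omega> b c) = (if a = c then 1 else 0)"
begin

lemma Kzero: "j < k \<Longrightarrow> K (fs(j := 0)) = 0"
proof -
  assume j: "j < k"
  have "cscale 0 (0::'v ser) = 0" by simp
  hence "K (fs(j := 0)) = K (fs(j := cscale 0 0))" by simp
  also have "\<dots> = 0" using Kscl[OF j, of fs 0 0] by simp
  finally show ?thesis .
qed

definition z :: "'v ser" where "z = lin (\<lambda>b. \<omega> b undefined)"

lemma z0[simp]: "z 0 = 0" by (simp add: z_def)
lemma zR: "z \<in> R" by (simp add: z_def gR_lin[OF gR])
lemma ham_zz: "ham \<pi> H z = pdiff undefined H"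
  unfolding z_def by (rule ham_z[OF inv2])
lemma z_ne_sone: "z \<noteq> sone"
  using z0 sone_at0 by force

lemma claim:
  "\<forall>fs. card {j. j < k \<and> fs j \<noteq> z} = m \<longrightarrow> (\<forall>l<k. fs l \<in> R) \<longrightarrow> (\<forall>l<k. fs l = sone \<or> fs l 0 = 0)
     \<longrightarrow> (\<exists>i<k. fs i 0 = 0) \<longrightarrow> K fs = 0"
proof (induction m rule: less_induct)
  case (less m)
  show ?case
  proof (intro allI impI)
    fix fs :: "nat \<Rightarrow> 'v ser"
    assume cnt: "card {j. j < k \<and> fs j \<noteq> z} = m" and fR: "\<forall>l<k. fs l \<in> R"
      and f01: "\<forall>l<k. fs l = sone \<or> fs l 0 = 0" and ex: "\<exists>i<k. fs i 0 = 0"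
    let ?c = "undefined :: 'v"
    show "K fs = 0"
    proof (cases "\<exists>i<k. fs i 0 = 0 \<and> fs i \<noteq> z")
      case True
      then obtain i where i: "i < k" "fs i 0 = 0" "fs i \<noteq> z" by blast
      define g where "g = fs i"
      define H where "H = integ ?c g"
      define gs where "gs = fs(i := z)"
      have HR: "H \<in> R" unfolding H_def g_def using fR i gR_integ[OF gR] by auto
      have Hub: "\<And>a. H (ub a) = 0" unfolding H_def g_def using i(2) integ_ub[of "fs i"] by blast
      have gsR: "\<And>l. l < k \<Longrightarrow> gs l \<in> R" unfolding gs_def using fR zR by auto
      have hz: "ham \<pi> H z = g" unfolding H_def by (simp add: ham_zz pdiff_integ)
      have trm: "K (gs(j := ham \<pi> H (gs j))) = (if gs j = z then K fs else 0)" if j: "j < k" for j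
      proof (cases "gs j = z")
        case True
        show ?thesis
        proof (cases "j = i")
          case True
          have "gs(j := ham \<pi> H (gs j)) = fs" using True hz by (simp add: gs_def g_def)
          thus ?thesis using \<open>gs j = z\<close> by simp
        next
          case False
          have fj: "fs j = z" using \<open>gs j = z\<close> False by (simp add: gs_def)
          have "gs(j := ham \<pi> H (gs j)) = fs \<circ> sw i j"
            using False by (intro ext) (simp add: gs_def sw_def fj hz[unfolded g_def])
          hence "K (gs(j := ham \<pi> H (gs j))) = K fs" using Ksym[of fs i j] fR i j by auto
          thus ?thesis using \<open>gs j = z\<close> by simp
        qed
      next
        case False
        show ?thesis
        proof (cases "gs j = sone")
          case True
          thus ?thesis using False Kzero[OF j] by simp
        next
          case False2: False
          have ji: "j \<noteq> i" using False by (auto simp: gs_def)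
          have fj: "fs j = gs j" using ji by (simp add: gs_def)
          have fj0: "fs j 0 = 0" using f01 j False2 fj by auto
          define ts where "ts = gs(j := ham \<pi> H (gs j))"
          have sub: "{l. l < k \<and> ts l \<noteq> z} \<subseteq> {l. l < k \<and> fs l \<noteq> z} - {i}"
            using ji fj False by (auto simp: ts_def gs_def)
          have cardlt: "card {l. l < k \<and> ts l \<noteq> z} < m"
          proof -
            have "card {l. l < k \<and> ts l \<noteq> z} \<le> card ({l. l < k \<and> fs l \<noteq> z} - {i})"
              by (rule card_mono[OF _ sub]) simp
            also have "\<dots> < card {l. l < k \<and> fs l \<noteq> z}"
              by (rule card_Diff1_less) (use i in auto)
            finally show ?thesis using cnt by simp
          qed
          have tsR: "\<forall>l<k. ts l \<in> R"
          proof (intro allI impI)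
            fix l assume l: "l < k"
            show "ts l \<in> R"
            proof (cases "l = j")
              case True thus ?thesis using gR_ham[OF gR HR gsR[OF j]] by (simp add: ts_def)
            next
              case False thus ?thesis using gsR[OF l] by (simp add: ts_def)
            qed
          qed
          have ts01: "\<forall>l<k. ts l = sone \<or> ts l 0 = 0"
          proof (intro allI impI)
            fix l assume l: "l < k"
            show "ts l = sone \<or> ts l 0 = 0"
            proof (cases "l = j")
              case True thus ?thesis using ham_at0[of H, OF Hub] by (simp add: ts_def)
            next
              case False
              show ?thesis
              proof (cases "l = i")
                case True thus ?thesis using False by (simp add: ts_def gs_def)
              next
                case False2: False thus ?thesis using False f01 l by (simp add: ts_def gs_def)
              qed
            qed
          qed
          have tsex: "\<exists>i<k. ts i 0 = 0" using i ji by (intro exI[of _ i]) (simp add: ts_def gs_def)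
          have "K ts = 0" using less[OF cardlt, rule_format, of ts] tsR ts01 tsex by blast
          thus ?thesis using False by (simp add: ts_def)
        qed
      qed
      have "0 = (\<Sum>j<k. K (gs(j := ham \<pi> H (gs j))))" using Kinv[OF HR Hub gsR] by simp
      also have "\<dots> = (\<Sum>j<k. if gs j = z then K fs else 0)" by (rule sum.cong) (auto simp: trm)
      also have "\<dots> = of_nat (card {j\<in>{..<k}. gs j = z}) * K fs" by (rule sum_if_const) simp
      finally have eq: "of_nat (card {j\<in>{..<k}. gs j = z}) * K fs = 0" by simp
      have "i \<in> {j\<in>{..<k}. gs j = z}" using i by (simp add: gs_def)
      hence "card {j\<in>{..<k}. gs j = z} \<noteq> 0" by (auto simp: card_eq_0_iff)
      thus "K fs = 0" using eq by (metis mult_eq_0_iff of_nat_eq_0_iff)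
    next
      case False
      then have allz: "\<And>l. l < k \<Longrightarrow> fs l 0 = 0 \<Longrightarrow> fs l = z" by blast
      obtain i where i: "i < k" "fs i 0 = 0" using ex by blast
      define H where "H = integ ?c z"
      have HR: "H \<in> R" unfolding H_def using gR_integ[OF gR zR] .
      have Hub: "\<And>a. H (ub a) = 0" unfolding H_def by (simp add: integ_ub)
      have hz: "ham \<pi> H z = z" unfolding H_def by (simp add: ham_zz pdiff_integ)
      have fsR: "\<And>l. l < k \<Longrightarrow> fs l \<in> R" using fR by auto
      have trm: "K (fs(j := ham \<pi> H (fs j))) = (if fs j = z then K fs else 0)" if j: "j < k" for j
      proof (cases "fs j = z")
        case True
        hence "fs(j := ham \<pi> H (fs j)) = fs" using hz by (metis fun_upd_triv)
        thus ?thesis using True by simp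
      next
        case False
        hence "fs j = sone" using f01 allz j by blast
        thus ?thesis using False Kzero[OF j] by simp
      qed
      have "0 = (\<Sum>j<k. K (fs(j := ham \<pi> H (fs j))))" using Kinv[OF HR Hub fsR] by simp
      also have "\<dots> = (\<Sum>j<k. if fs j = z then K fs else 0)" by (rule sum.cong) (auto simp: trm)
      also have "\<dots> = of_nat (card {j\<in>{..<k}. fs j = z}) * K fs" by (rule sum_if_const) simp
      finally have eq: "of_nat (card {j\<in>{..<k}. fs j = z}) * K fs = 0" by simp
      have "i \<in> {j\<in>{..<k}. fs j = z}" using i allz by simp
      hence "card {j\<in>{..<k}. fs j = z} \<noteq> 0" by (auto simp: card_eq_0_iff)
      thus "K fs = 0" using eq by (metis mult_eq_0_iff of_nat_eq_0_iff)
    qed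
  qed
qed


lemma prod_upd: "j < k \<Longrightarrow> (\<Prod>l<k. (fs(j := x)) l 0) = x 0 * (\<Prod>l\<in>{..<k} - {j}. fs l 0)"
  by (subst prod.remove[of _ j]) (auto intro!: prod.cong)

lemma Kmain:
  "\<forall>fs. card {j. j < k \<and> fs j \<noteq> sone \<and> fs j 0 \<noteq> 0} = b \<longrightarrow> (\<forall>l<k. fs l \<in> R)
     \<longrightarrow> K fs = K (\<lambda>_. sone) * (\<Prod>j<k. fs j 0)"
proof (induction b rule: less_induct)
  case (less b)
  show ?case
  proof (intro allI impI)
    fix fs :: "nat \<Rightarrow> 'v ser"
    assume cnt: "card {j. j < k \<and> fs j \<noteq> sone \<and> fs j 0 \<noteq> 0} = b" and fR: "\<forall>l<k. fs l \<in> R"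
    show "K fs = K (\<lambda>_. sone) * (\<Prod>j<k. fs j 0)"
    proof (cases "\<exists>j<k. fs j \<noteq> sone \<and> fs j 0 \<noteq> 0")
      case False
      hence f01: "\<forall>l<k. fs l = sone \<or> fs l 0 = 0" by blast
      show ?thesis
      proof (cases "\<exists>i<k. fs i 0 = 0")
        case True
        have "K fs = 0" using claim fR f01 True by blast
        moreover have "(\<Prod>j<k. fs j 0) = 0" using True by auto
        ultimately show ?thesis by simp
      next
        case False
        hence s: "\<forall>l<k. fs l = sone" using f01 by auto
        have "K fs = K (\<lambda>_. sone)" by (rule Kcong) (use s in auto)
        moreover have "(\<Prod>j<k. fs j 0) = 1" using s by simp
        ultimately show ?thesis by simp
      qed
    next
      case True
      then obtain j where j: "j < k" "fs j \<noteq> sone" "fs j 0 \<noteq> 0" by blast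
      define a where "a = fs j 0"
      define g where "g = fs j + cscale (- a) sone"
      have g0: "g 0 = 0" by (simp add: g_def a_def cscale_def)
      have gRR: "g \<in> R" unfolding g_def using fR j gR_add[OF gR] gR_cscale[OF gR] gR_sone[OF gR] by auto
      have fsj: "fs j = cscale a sone + g" by (auto simp: g_def cscale_def fun_eq_iff)
      have "K fs = K (fs(j := cscale a sone + g))" using fsj by (metis fun_upd_triv)
      also have "\<dots> = a * K (fs(j := sone)) + K (fs(j := g))" using Kadd[OF j(1)] Kscl[OF j(1)] by simp
      finally have KE: "K fs = a * K (fs(j := sone)) + K (fs(j := g))" .
      define B where "B = {j. j < k \<and> fs j \<noteq> sone \<and> fs j 0 \<noteq> 0}"
      have finB: "finite B" by (simp add: B_def)
      have jB: "j \<in> B" using j by (simp add: B_def)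
      have lt: "card (B - {j}) < b" using cnt finB jB unfolding B_def[symmetric]
        by (metis card_Diff1_less)
      have sub1: "{l. l < k \<and> (fs(j := sone)) l \<noteq> sone \<and> (fs(j := sone)) l 0 \<noteq> 0} \<subseteq> B - {j}"
        by (auto simp: B_def)
      have sub2: "{l. l < k \<and> (fs(j := g)) l \<noteq> sone \<and> (fs(j := g)) l 0 \<noteq> 0} \<subseteq> B - {j}"
        using g0 by (auto simp: B_def)
      have c1: "card {l. l < k \<and> (fs(j := sone)) l \<noteq> sone \<and> (fs(j := sone)) l 0 \<noteq> 0} < b"
        using card_mono[OF _ sub1] lt finB by (meson finite_Diff le_less_trans)
      have c2: "card {l. l < k \<and> (fs(j := g)) l \<noteq> sone \<and> (fs(j := g)) l 0 \<noteq> 0} < b"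
        using card_mono[OF _ sub2] lt finB by (meson finite_Diff le_less_trans)
      have R1: "\<forall>l<k. (fs(j := sone)) l \<in> R" using fR gR_sone[OF gR] by auto
      have R2: "\<forall>l<k. (fs(j := g)) l \<in> R" using fR gRR by auto
      have K1: "K (fs(j := sone)) = K (\<lambda>_. sone) * (\<Prod>l<k. (fs(j := sone)) l 0)"
        using less[OF c1] R1 by blast
      have K2: "K (fs(j := g)) = K (\<lambda>_. sone) * (\<Prod>l<k. (fs(j := g)) l 0)"
        using less[OF c2] R2 by blast
      have PR: "(\<Prod>l<k. fs l 0) = fs j 0 * (\<Prod>l\<in>{..<k}-{j}. fs l 0)"
        by (rule prod.remove) (use j in auto)
      show ?thesis
        unfolding KE K1 K2 prod_upd[OF j(1)] PR by (simp add: g0 a_def)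
    qed
  qed
qed

lemma Kfinal: "(\<And>l. l < k \<Longrightarrow> fs l \<in> R) \<Longrightarrow> K fs = K (\<lambda>_. sone) * (\<Prod>j<k. fs j 0)"
  using Kmain by blast

end



lemma diffop_at0:
  assumes "diffop R D"
  shows "\<exists>S w. finite S \<and> (\<forall>f. D f 0 = (\<Sum>\<gamma>\<in>S. w \<gamma> * f \<gamma>))"
proof -
  obtain S c where S: "finite S" and D: "\<forall>f. D f = (\<Sum>\<gamma>\<in>S. cmul (c \<gamma>) (pdiffs \<gamma> f))"
    using assms unfolding diffop_def by blast
  have e: "(\<lambda>v. (0::'a\<Rightarrow>nat) v + \<gamma> v) = \<gamma>" for \<gamma> by simp
  have "D f 0 = (\<Sum>\<gamma>\<in>S. (c \<gamma> 0 * (\<Prod>a\<in>UNIV. of_nat (fact (\<gamma> a)))) * f \<gamma>)" for f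
    using D by (simp add: sum_fun_apply cmul_at0 pdiffs_def mult.assoc)
  thus ?thesis using S by (intro exI[of _ S] exI[of _ "\<lambda>\<gamma>. c \<gamma> 0 * (\<Prod>a\<in>UNIV. of_nat (fact (\<gamma> a)))"]) simp
qed

lemma diffop_lin:
  assumes "diffop R D"
  shows "D (f + g) 0 = D f 0 + D g 0" "D (cscale a f) 0 = a * D f 0"
proof -
  obtain S w where "\<forall>f. D f 0 = (\<Sum>\<gamma>\<in>S. w \<gamma> * f \<gamma>)" using diffop_at0[OF assms] by blast
  thus "D (f + g) 0 = D f 0 + D g 0" "D (cscale a f) 0 = a * D f 0"
    by (simp_all add: distrib_left sum.distrib cscale_def sum_distrib_left mult.left_commute)
qed

lemma prod_upd_gen: "j < (k::nat) \<Longrightarrow> (\<Prod>l<k. G l ((fs(j := x)) l)) = G j x * (\<Prod>l\<in>{..<k} - {j}. G l (fs l))"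
proof -
  assume j: "j < k"
  have "(\<Prod>l<k. G l ((fs(j := x)) l)) = G j ((fs(j := x)) j) * (\<Prod>l\<in>{..<k} - {j}. G l ((fs(j := x)) l))"
    by (rule prod.remove) (use j in auto)
  also have "(\<Prod>l\<in>{..<k} - {j}. G l ((fs(j := x)) l)) = (\<Prod>l\<in>{..<k} - {j}. G l (fs l))"
    by (rule prod.cong) auto
  finally show ?thesis by simp
qed

lemma coeff_ind:
  fixes \<psi> :: "(nat \<Rightarrow> 'v::finite ser) \<Rightarrow> 'v ser"
  assumes gR: "goodR R"
    and inv1: "\<forall>a c. (\<Sum>b\<in>UNIV. \<omega> a b * \<pi> b c) = (if a = c then 1 else 0)"
    and hinv: "ham_invariant \<pi> R k \<psi>"
    and base: "\<And>fs. (\<And>j. j < k \<Longrightarrow> fs j \<in> R) \<Longrightarrow> \<psi> fs 0 = C * mprod k fs 0"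
  shows "\<forall>\<alpha> fs. sum \<alpha> UNIV = d \<longrightarrow> (\<forall>j<k. fs j \<in> R) \<longrightarrow> \<psi> fs \<alpha> = C * mprod k fs \<alpha>"
proof (induction d rule: less_induct)
  case (less d)
  show ?case
  proof (intro allI impI)
    fix \<alpha> :: "'v \<Rightarrow> nat" and fs
    assume d: "sum \<alpha> UNIV = d" and fR: "\<forall>j<k. fs j \<in> R"
    show "\<psi> fs \<alpha> = C * mprod k fs \<alpha>"
    proof (cases "\<alpha> = 0")
      case True thus ?thesis using base fR by auto
    next
      case False
      then obtain b where b: "\<alpha> b \<noteq> 0" by (auto simp: fun_eq_iff)
      define \<beta> where "\<beta> = \<alpha>(b := \<alpha> b - 1)"
      have ab: "\<alpha> = \<beta> + ub b" using b by (auto simp: \<beta>_def ub_def fun_eq_iff)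
      have "sum \<alpha> UNIV = sum \<beta> UNIV + sum (ub b) UNIV" by (simp add: ab sum.distrib)
      moreover have "sum (ub b) UNIV = 1" by (simp add: ub_def)
      ultimately have lt: "sum \<beta> UNIV < d" using d by simp
      define h where "h = lin (\<lambda>a. \<omega> b a)"
      have hR: "h \<in> R" by (simp add: h_def gR_lin[OF gR])
      have "pdiff b (\<psi> fs) = ham \<pi> h (\<psi> fs)" unfolding h_def by (rule pdiff_as_ham[OF inv1, symmetric])
      also have "\<dots> = (\<Sum>j<k. \<psi> (fs(j := ham \<pi> h (fs j))))" using hinv hR fR unfolding ham_invariant_def by blast
      also have "\<dots> = (\<Sum>j<k. \<psi> (fs(j := pdiff b (fs j))))" unfolding h_def pdiff_as_ham[OF inv1] ..
      finally have E: "pdiff b (\<psi> fs) = (\<Sum>j<k. \<psi> (fs(j := pdiff b (fs j))))" .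
      have "of_nat (\<beta> b + 1) * \<psi> fs \<alpha> = pdiff b (\<psi> fs) \<beta>" by (simp add: pdiff_alt ab)
      also have "\<dots> = (\<Sum>j<k. \<psi> (fs(j := pdiff b (fs j))) \<beta>)" by (simp add: E sum_fun_apply)
      also have "\<dots> = (\<Sum>j<k. C * mprod k (fs(j := pdiff b (fs j))) \<beta>)"
      proof (rule sum.cong[OF refl])
        fix j assume j: "j \<in> {..<k}"
        have "\<forall>l<k. (fs(j := pdiff b (fs j))) l \<in> R" using fR gR_pdiff[OF gR] by auto
        thus "\<psi> (fs(j := pdiff b (fs j))) \<beta> = C * mprod k (fs(j := pdiff b (fs j))) \<beta>"
          using less[OF lt] by blast
      qed
      also have "\<dots> = C * pdiff b (mprod k fs) \<beta>" by (simp add: pdiff_mprod sum_fun_apply sum_distrib_left)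
      also have "\<dots> = of_nat (\<beta> b + 1) * (C * mprod k fs \<alpha>)" by (simp add: pdiff_alt ab)
      finally show ?thesis by (simp del: of_nat_Suc)
    qed
  qed
qed




lemma K_upd:
  assumes j: "j < (k::nat)"
  shows "(\<Sum>i<N. \<Prod>l<k. Ds i l ((fs(j := x)) l) (0::'v::finite\<Rightarrow>nat))
       = (\<Sum>i<N. Ds i j x 0 * (\<Prod>l\<in>{..<k} - {j}. Ds i l (fs l) 0))"
proof (rule sum.cong[OF refl])
  fix i
  show "(\<Prod>l<k. Ds i l ((fs(j := x)) l) 0) = Ds i j x 0 * (\<Prod>l\<in>{..<k} - {j}. Ds i l (fs l) 0)"
    using prod_upd_gen[OF j, where G = "\<lambda>l y. Ds i l y 0"] by simp
qed

theorem mainTheorem11: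
  fixes \<omega> \<pi> :: "'v::finite \<Rightarrow> 'v \<Rightarrow> complex" and n :: nat and R :: "'v ser set"
  assumes skew: "\<forall>a b. \<omega> a b = - \<omega> b a"
    and inv1: "\<forall>a c. (\<Sum>b\<in>UNIV. \<omega> a b * \<pi> b c) = (if a = c then 1 else 0)"
    and inv2: "\<forall>a c. (\<Sum>b\<in>UNIV. \<pi> a b * \<omega> b c) = (if a = c then 1 else 0)"
    and n: "n \<ge> 2"
    and R: "R = {f. is_poly f} \<or> R = UNIV"
    and pd: "polydiff R (n - 1) \<psi>"
  shows "(symmetric_op R (n - 1) \<psi> \<and> ham_invariant \<pi> R (n - 1) \<psi>) \<longleftrightarrow>
         (\<exists>c. \<forall>fs. (\<forall>j<n - 1. fs j \<in> R) \<longrightarrow> \<psi> fs = cscale c (mprod (n - 1) fs))"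
proof -
  define k where "k = n - 1"
  have gR: "goodR R" using R by (simp add: goodR_def)
  show ?thesis unfolding k_def[symmetric]
  proof
    assume "symmetric_op R k \<psi> \<and> ham_invariant \<pi> R k \<psi>"
    hence sym: "symmetric_op R k \<psi>" and hinv: "ham_invariant \<pi> R k \<psi>" by auto
    have pdk: "polydiff R k \<psi>" using pd by (simp add: k_def)
    then obtain N :: nat and Ds where Dsd': "\<forall>i j. diffop R (Ds i j)"
      and rep': "\<forall>fs. (\<forall>j<k. fs j \<in> R) \<longrightarrow> \<psi> fs = (\<Sum>i<N. mprod k (\<lambda>j. Ds i j (fs j)))"
      unfolding polydiff_def by (elim exE conjE) fast
    have Dsd: "\<And>i j. diffop R (Ds i j)" using Dsd' by blast
    have rep: "\<And>fs. (\<forall>j<k. fs j \<in> R) \<Longrightarrow> \<psi> fs = (\<Sum>i<N. mprod k (\<lambda>j. Ds i j (fs j)))"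
      using rep' by blast
    define K where "K fs = (\<Sum>i<N. \<Prod>j<k. Ds i j (fs j) 0)" for fs
    have psi0: "\<psi> fs 0 = K fs" if "\<forall>j<k. fs j \<in> R" for fs
      using rep[OF that] by (simp add: K_def sum_fun_apply mprod_at0)
    interpret coreK K k R \<pi> \<omega>
    proof
      show "goodR R" by (rule gR)
    next
      fix fs j f g assume j: "j < k"
      show "K (fs(j := f + g)) = K (fs(j := f)) + K (fs(j := g))"
        unfolding K_def K_upd[OF j] diffop_lin(1)[OF Dsd] by (simp add: distrib_right sum.distrib)
    next
      fix fs j a f assume j: "j < k"
      show "K (fs(j := cscale a f)) = a * K (fs(j := f))"
        unfolding K_def K_upd[OF j] diffop_lin(2)[OF Dsd] by (simp add: sum_distrib_left mult.assoc)
    next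
      fix fs gs :: "nat \<Rightarrow> 'v ser" assume "\<And>j. j < k \<Longrightarrow> fs j = gs j"
      thus "K fs = K gs" unfolding K_def by (intro sum.cong prod.cong) auto
    next
      fix fs i j assume fR: "\<And>l. l < k \<Longrightarrow> fs l \<in> R" and i: "i < k" and j: "j < k"
      have b: "bij_betw (sw i j) {..<k} {..<k}" by (rule bij_sw[OF i j])
      have fR2: "\<forall>l<k. (fs \<circ> sw i j) l \<in> R" using fR b by (auto simp: bij_betw_def)
      have fR1: "\<forall>l<k. fs l \<in> R" using fR by blast
      have "\<psi> (fs \<circ> sw i j) = \<psi> fs" using sym[unfolded symmetric_op_def] b fR1 by blast
      moreover have "\<psi> (fs \<circ> sw i j) 0 = K (fs \<circ> sw i j)" by (rule psi0[OF fR2])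
      moreover have "\<psi> fs 0 = K fs" by (rule psi0[OF fR1])
      ultimately show "K (fs \<circ> sw i j) = K fs" by metis
    next
      fix H gs assume HR: "H \<in> R" and Hub: "\<And>a. H (ub a) = 0" and gsR: "\<And>l. l < k \<Longrightarrow> gs l \<in> R"
      have "(\<Sum>j<k. K (gs(j := ham \<pi> H (gs j)))) = (\<Sum>j<k. \<psi> (gs(j := ham \<pi> H (gs j))) 0)"
      proof (rule sum.cong[OF refl])
        fix j assume "j \<in> {..<k}"
        have "\<forall>l<k. (gs(j := ham \<pi> H (gs j))) l \<in> R" using gsR gR_ham[OF gR HR] by auto
        thus "K (gs(j := ham \<pi> H (gs j))) = \<psi> (gs(j := ham \<pi> H (gs j))) 0" using psi0 by auto
      qed
      also have "\<dots> = ham \<pi> H (\<psi> gs) 0"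
      proof -
        have gsR1: "\<forall>l<k. gs l \<in> R" using gsR by blast
        have "ham \<pi> H (\<psi> gs) = (\<Sum>j<k. \<psi> (gs(j := ham \<pi> H (gs j))))"
          using hinv[unfolded ham_invariant_def] HR gsR1 by blast
        thus ?thesis by (simp add: sum_fun_apply)
      qed
      also have "\<dots> = 0" by (rule ham_at0) (rule Hub)
      finally show "(\<Sum>j<k. K (gs(j := ham \<pi> H (gs j)))) = 0" .
    next
      show "\<forall>a c. (\<Sum>b\<in>UNIV. \<pi> a b * \<omega> b c) = (if a = c then 1 else 0)" by (rule inv2)
    qed
    define C where "C = K (\<lambda>_. sone)"
    have base: "\<psi> fs 0 = C * mprod k fs 0" if "\<And>j. j < k \<Longrightarrow> fs j \<in> R" for fs
      using psi0[of fs] Kfinal[of fs] that by (simp add: C_def mprod_at0)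
    have all: "\<forall>\<alpha> fs. sum \<alpha> UNIV = d \<longrightarrow> (\<forall>j<k. fs j \<in> R) \<longrightarrow> \<psi> fs \<alpha> = C * mprod k fs \<alpha>" for d
      by (rule coeff_ind[OF gR inv1 hinv base])
    show "\<exists>c. \<forall>fs. (\<forall>j<k. fs j \<in> R) \<longrightarrow> \<psi> fs = cscale c (mprod k fs)"
    proof (intro exI allI impI)
      fix fs assume "\<forall>j<k. fs j \<in> R"
      thus "\<psi> fs = cscale C (mprod k fs)" using all by (auto simp: cscale_def fun_eq_iff)
    qed
  next
    assume "\<exists>c. \<forall>fs. (\<forall>j<k. fs j \<in> R) \<longrightarrow> \<psi> fs = cscale c (mprod k fs)"
    then obtain c where c: "\<And>fs. (\<forall>j<k. fs j \<in> R) \<Longrightarrow> \<psi> fs = cscale c (mprod k fs)" by blast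
    have "symmetric_op R k \<psi>"
      unfolding symmetric_op_def
    proof (intro allI impI)
      fix \<sigma> fs assume b: "bij_betw \<sigma> {..<k} {..<k}" and fR: "\<forall>j<k. fs j \<in> R"
      have fR2: "\<forall>j<k. (fs \<circ> \<sigma>) j \<in> R" using fR b by (auto simp: bij_betw_def)
      have "\<psi> (fs \<circ> \<sigma>) = cscale c (mprod k (fs \<circ> \<sigma>))" by (rule c[OF fR2])
      also have "\<dots> = cscale c (mprod k fs)" by (simp only: mprod_perm[OF b])
      also have "\<dots> = \<psi> fs" by (rule c[OF fR, symmetric])
      finally show "\<psi> (fs \<circ> \<sigma>) = \<psi> fs" .
    qed
    moreover have "ham_invariant \<pi> R k \<psi>"
      unfolding ham_invariant_def
    proof (intro allI impI)
      fix h fs assume hR: "h \<in> R" and fR: "\<forall>j<k. fs j \<in> R"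
      have "ham \<pi> h (\<psi> fs) = cscale c (\<Sum>j<k. mprod k (fs(j := ham \<pi> h (fs j))))"
        using c[OF fR] by (simp add: ham_cscale ham_mprod)
      also have "\<dots> = (\<Sum>j<k. \<psi> (fs(j := ham \<pi> h (fs j))))"
        unfolding cscale_sum
      proof (rule sum.cong[OF refl])
        fix j assume "j \<in> {..<k}"
        have "\<forall>l<k. (fs(j := ham \<pi> h (fs j))) l \<in> R" using fR gR_ham[OF gR hR] by auto
        thus "cscale c (mprod k (fs(j := ham \<pi> h (fs j)))) = \<psi> (fs(j := ham \<pi> h (fs j)))"
          using c by auto
      qed
      finally show "ham \<pi> h (\<psi> fs) = (\<Sum>j<k. \<psi> (fs(j := ham \<pi> h (fs j))))" .
    qed
    ultimately show "symmetric_op R k \<psi> \<and> ham_invariant \<pi> R k \<psi>" by blast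
  qed
qed


end
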